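(* Let $N\ge1$, $K\ge2$ be integers with $N$ divisible by $K$, put $m=N/K$, and let $\alpha\in[1,2]$. Let $\sigma$ be a mixed strategy of $\mathcal{B}_\alpha(N,K)$ such that either (a) for every battlefield $k$ the marginal $\sigma_k$ is the uniform distribution on the odd integers $\{1,3,\ldots,2m-1\}$, or (b) for every battlefield $k$ the marginal $\sigma_k$ is the uniform distribution on the even integers $\{0,2,\ldots,2m\}$. Then $\sigma$ is a symmetric equilibrium strategy of $\mathcal{B}_\alpha(N,K)$.
   Context: Fix integers $N\ge1$, $K\ge2$ and a real number $\alpha$. The Colonel Blotto game $\mathcal{B}_\alpha(N,K)$ is the two-player simultaneous-move game with players $A,B$, each with pure strategy set $S=\{s\in\{0,1,\ldots,N\}^K:\sum_{k=1}^K s_k=N\}$, in which the payoff of player $i$ at the pure profile $(s^i,s^{-i})$ is $\pi^i(s^i,s^{-i})=\sum_{k=1}^K\big(\mathbf 1[s^i_k>s^{-i}_k]+\tfrac{\alpha}{2}\mathbf 1[s^i_k=s^{-i}_k]\big)$. Mixed strategies are probability distributions on $S$, with expected payoffs under independent randomization. A symmetric equilibrium strategy is a mixed strategy $\sigma$ such that $(\sigma,\sigma)$ is a Nash equilibrium. For a mixed strategy $\sigma$ and battlefield $k$, the marginal $\sigma_k$ is the distribution of $s_k$ when $s\sim\sigma$. *)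

theory Defs
  imports "HOL-Probability.Probability"
begin

definition blotto_pure :: "nat \<Rightarrow> nat \<Rightarrow> (nat \<Rightarrow> nat) set" where
  "blotto_pure N K = {s. (\<forall>k. K \<le> k \<longrightarrow> s k = 0) \<and> (\<Sum>k<K. s k) = N}"

definition blotto_payoff :: "real \<Rightarrow> nat \<Rightarrow> (nat \<Rightarrow> nat) \<Rightarrow> (nat \<Rightarrow> nat) \<Rightarrow> real" where
  "blotto_payoff \<alpha> K s t =
     (\<Sum>k<K. (if s k > t k then 1 else 0) + (\<alpha> / 2) * (if s k = t k then 1 else 0))"

definition blotto_mixed :: "nat \<Rightarrow> nat \<Rightarrow> (nat \<Rightarrow> nat) pmf set" where
  "blotto_mixed N K = {\<sigma>. set_pmf \<sigma> \<subseteq> blotto_pure N K}"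

definition blotto_exp_payoff ::
  "real \<Rightarrow> nat \<Rightarrow> (nat \<Rightarrow> nat) pmf \<Rightarrow> (nat \<Rightarrow> nat) pmf \<Rightarrow> real" where
  "blotto_exp_payoff \<alpha> K \<sigma> \<tau> =
     measure_pmf.expectation (pair_pmf \<sigma> \<tau>) (\<lambda>(s, t). blotto_payoff \<alpha> K s t)"

text \<open>(\<sigma>, \<sigma>) is a Nash equilibrium: no player gains by a unilateral deviation to
  any mixed strategy (the game is symmetric, player A's and B's payoffs are given
  by the same function with the roles exchanged).\<close>
definition blotto_symmetric_eq :: "nat \<Rightarrow> nat \<Rightarrow> real \<Rightarrow> (nat \<Rightarrow> nat) pmf \<Rightarrow> bool" where
  "blotto_symmetric_eq N K \<alpha> \<sigma> \<longleftrightarrow>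
     \<sigma> \<in> blotto_mixed N K \<and>
     (\<forall>\<tau> \<in> blotto_mixed N K.
        blotto_exp_payoff \<alpha> K \<tau> \<sigma> \<le> blotto_exp_payoff \<alpha> K \<sigma> \<sigma>)"

definition marginal :: "(nat \<Rightarrow> nat) pmf \<Rightarrow> nat \<Rightarrow> nat pmf" where
  "marginal \<sigma> k = map_pmf (\<lambda>s. s k) \<sigma>"

end

theory Submission
  imports Defs
begin

definition hh :: "real \<Rightarrow> nat \<Rightarrow> nat \<Rightarrow> real" where
  "hh \<alpha> x y = (if x > y then 1 else 0) + (\<alpha> / 2) * (if x = y then 1 else 0)"

lemma S_bound:
  assumes "1 \<le> \<alpha>" "\<alpha> \<le> 2" "e \<le> 1"
  shows "2 * (\<Sum>i<n. hh \<alpha> x (2*i+e)) \<le> min (2 * real n) (real x - real e + \<alpha>)"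
proof (induction n)
  case 0 then show ?case using assms by auto
next
  case (Suc n)
  consider "x > 2*n+e" | "x = 2*n+e" | "x < 2*n+e" by linarith
  then show ?case
  proof cases
    case 1
    then have "real x \<ge> 2*n+e+1" by linarith
    then show ?thesis using Suc 1 assms by (simp add: hh_def)
  next
    case 2
    then show ?thesis using Suc assms by (simp add: hh_def)
  next
    case 3
    then show ?thesis using Suc assms by (simp add: hh_def)
  qed
qed

lemma S_eq:
  fixes x j e n :: nat
  assumes "x = 2*j+e"
  shows "(\<Sum>i<n. hh \<alpha> x (2*i+e)) = (if n \<le> j then real n else real j + \<alpha>/2)"
proof (induction n)
  case 0 then show ?case by auto
next
  case (Suc n)
  consider "n < j" | "n = j" | "n > j" by linarith
  then show ?case
    by cases (use Suc assms in \<open>auto simp: hh_def\<close>)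
qed

lemma int_bdd:
  fixes f :: "'a \<Rightarrow> real"
  assumes "\<And>x. x \<in> set_pmf M \<Longrightarrow> norm (f x) \<le> B"
  shows "integrable (measure_pmf M) f"
  by (rule measure_pmf.integrable_const_bound[where B=B]) (use assms in \<open>auto simp: AE_measure_pmf_iff\<close>)


lemma main_gen:
  fixes N K n e :: nat and \<alpha> :: real and \<sigma> :: "(nat \<Rightarrow> nat) pmf"
  assumes n1: "n \<ge> 1" and e1: "e \<le> 1" and a1: "1 \<le> \<alpha>" and a2: "\<alpha> \<le> 2"
    and \<sigma>m: "\<sigma> \<in> blotto_mixed N K"
    and marg: "\<forall>k<K. marginal \<sigma> k = pmf_of_set ((\<lambda>i. 2*i+e) ` {..<n})"
  shows "blotto_symmetric_eq N K \<alpha> \<sigma>"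
proof -
  define A where "A = (\<lambda>i::nat. 2*i+e) ` {..<n}"
  have finA: "finite A" by (simp add: A_def)
  have neA: "A \<noteq> {}" using n1 by (auto simp: A_def lessThan_empty_iff)
  have injA: "inj_on (\<lambda>i::nat. 2*i+e) {..<n}" by (auto simp: inj_on_def)
  have cardA: "card A = n" using injA by (simp add: A_def card_image)
  define f where "f x = (\<Sum>i<n. hh \<alpha> x (2*i+e)) / real n" for x
  define V where "V = (real N - real K * real e + real K * \<alpha>) / (2 * real n)"
  have fE: "measure_pmf.expectation (pmf_of_set A) (hh \<alpha> x) = f x" for x
    using finA neA cardA by (simp add: integral_pmf_of_set f_def A_def sum.reindex[OF injA])
  have hh_nn: "0 \<le> hh \<alpha> x y" for x y using a1 by (simp add: hh_def)
  have hh_le: "hh \<alpha> x y \<le> 1 + \<alpha>" for x y using a1 by (simp add: hh_def)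
  have f_nn: "0 \<le> f x" for x by (simp add: f_def hh_nn sum_nonneg)
  have f_le2: "f x \<le> 1 + \<alpha>" for x
  proof -
    have "(\<Sum>i<n. hh \<alpha> x (2*i+e)) \<le> real n * (1 + \<alpha>)"
      using sum_bounded_above[of "{..<n}" "\<lambda>i. hh \<alpha> x (2*i+e)" "1+\<alpha>"] hh_le by simp
    then show ?thesis using n1 by (simp add: f_def field_simps)
  qed
  have f_le: "f x \<le> (real x - real e + \<alpha>) / (2 * real n)" for x
    using S_bound[OF a1 a2 e1, where n=n and x=x] n1 by (simp add: f_def field_simps)
  have f_eq: "f x = (real x - real e + \<alpha>) / (2 * real n)" if xA: "x \<in> A" for x
  proof -
    obtain j where j: "j < n" "x = 2*j+e" using xA unfolding A_def by blast
    have "(\<Sum>i<n. hh \<alpha> x (2*i+e)) = real j + \<alpha>/2" using S_eq[OF j(2), of \<alpha> n] j(1) by simp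
    then show ?thesis using n1 j by (simp add: f_def field_simps)
  qed
  have Lsum: "(\<Sum>k<K. (real (s k) - real e + \<alpha>) / (2 * real n)) = V" if "s \<in> blotto_pure N K" for s
  proof -
    have "(\<Sum>k<K. real (s k)) = real N" using that unfolding blotto_pure_def
      by (metis (mono_tags, lifting) mem_Collect_eq of_nat_sum)
    then show ?thesis unfolding V_def
      by (simp add: sum_divide_distrib[symmetric] sum.distrib sum_subtractf)
  qed
  have pay_eq: "blotto_payoff \<alpha> K s t = (\<Sum>k<K. hh \<alpha> (s k) (t k))" for s t
    by (simp add: blotto_payoff_def hh_def)
  have pay_nn: "0 \<le> blotto_payoff \<alpha> K s t" for s t
    unfolding pay_eq by (simp add: sum_nonneg hh_nn)
  have pay_le: "blotto_payoff \<alpha> K s t \<le> real K * (1 + \<alpha>)" for s t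
    unfolding pay_eq using sum_bounded_above[of "{..<K}" "\<lambda>k. hh \<alpha> (s k) (t k)" "1+\<alpha>"] hh_le by simp
  have g_nn: "0 \<le> (\<Sum>k<K. f (s k))" for s by (simp add: sum_nonneg f_nn)
  have g_le: "(\<Sum>k<K. f (s k)) \<le> real K * (1 + \<alpha>)" for s
    using sum_bounded_above[of "{..<K}" "\<lambda>k. f (s k)" "1+\<alpha>"] f_le2 by simp
  have inner: "measure_pmf.expectation \<sigma> (\<lambda>t. blotto_payoff \<alpha> K s t) = (\<Sum>k<K. f (s k))" for s
  proof -
    have "measure_pmf.expectation \<sigma> (\<lambda>t. blotto_payoff \<alpha> K s t)
        = measure_pmf.expectation \<sigma> (\<lambda>t. \<Sum>k<K. hh \<alpha> (s k) (t k))" by (simp add: pay_eq)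
    also have "\<dots> = (\<Sum>k<K. measure_pmf.expectation \<sigma> (\<lambda>t. hh \<alpha> (s k) (t k)))"
      by (rule Bochner_Integration.integral_sum) (rule int_bdd[where B="1+\<alpha>"], use hh_nn hh_le in auto)
    also have "\<dots> = (\<Sum>k<K. f (s k))"
    proof (rule sum.cong)
      fix k assume "k \<in> {..<K}"
      then have "marginal \<sigma> k = pmf_of_set A" using marg by (simp add: A_def)
      then have "measure_pmf.expectation \<sigma> (\<lambda>t. hh \<alpha> (s k) (t k))
           = measure_pmf.expectation (pmf_of_set A) (hh \<alpha> (s k))"
        unfolding marginal_def by (metis integral_map_pmf)
      then show "measure_pmf.expectation \<sigma> (\<lambda>t. hh \<alpha> (s k) (t k)) = f (s k)" using fE by simp
    qed simp
    finally show ?thesis .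
  qed
  have key: "blotto_exp_payoff \<alpha> K \<tau> \<sigma> = measure_pmf.expectation \<tau> (\<lambda>s. \<Sum>k<K. f (s k))" for \<tau>
  proof -
    have intg: "integrable (measure_pmf \<tau>) (\<lambda>s. \<Sum>k<K. f (s k))"
      by (rule int_bdd[where B="real K * (1+\<alpha>)"]) (use g_nn g_le in auto)
    have "blotto_exp_payoff \<alpha> K \<tau> \<sigma>
        = enn2real (\<integral>\<^sup>+p. ennreal ((\<lambda>(s, t). blotto_payoff \<alpha> K s t) p) \<partial>pair_pmf \<tau> \<sigma>)"
      unfolding blotto_exp_payoff_def
      by (rule integral_eq_nn_integral) (auto simp: pay_nn)
    also have "(\<integral>\<^sup>+p. ennreal ((\<lambda>(s, t). blotto_payoff \<alpha> K s t) p) \<partial>pair_pmf \<tau> \<sigma>)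
        = (\<integral>\<^sup>+s. \<integral>\<^sup>+t. ennreal (blotto_payoff \<alpha> K s t) \<partial>\<sigma> \<partial>\<tau>)"
      by (simp add: nn_integral_pair_pmf')
    also have "\<dots> = (\<integral>\<^sup>+s. ennreal (\<Sum>k<K. f (s k)) \<partial>\<tau>)"
    proof (rule nn_integral_cong)
      fix s
      have "(\<integral>\<^sup>+t. ennreal (blotto_payoff \<alpha> K s t) \<partial>\<sigma>)
          = ennreal (measure_pmf.expectation \<sigma> (\<lambda>t. blotto_payoff \<alpha> K s t))"
        by (rule nn_integral_eq_integral)
           (rule int_bdd[where B="real K * (1+\<alpha>)"], use pay_nn pay_le in auto)
      then show "(\<integral>\<^sup>+t. ennreal (blotto_payoff \<alpha> K s t) \<partial>\<sigma>) = ennreal (\<Sum>k<K. f (s k))"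
        using inner by simp
    qed
    also have "\<dots> = ennreal (measure_pmf.expectation \<tau> (\<lambda>s. \<Sum>k<K. f (s k)))"
      by (rule nn_integral_eq_integral[OF intg]) (simp add: g_nn)
    finally show ?thesis
      by (simp add: integral_nonneg_AE g_nn)
  qed
  have intg': "integrable (measure_pmf \<tau>) (\<lambda>s. \<Sum>k<K. f (s k))" for \<tau>
    by (rule int_bdd[where B="real K * (1+\<alpha>)"]) (use g_nn g_le in auto)
  have dev: "blotto_exp_payoff \<alpha> K \<tau> \<sigma> \<le> V" if "\<tau> \<in> blotto_mixed N K" for \<tau>
  proof -
    have "measure_pmf.expectation \<tau> (\<lambda>s. \<Sum>k<K. f (s k)) \<le> measure_pmf.expectation \<tau> (\<lambda>_. V)"
    proof (rule integral_mono_AE[OF intg'])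
      show "AE s in measure_pmf \<tau>. (\<Sum>k<K. f (s k)) \<le> V"
      proof (subst AE_measure_pmf_iff, intro ballI)
        fix s assume "s \<in> set_pmf \<tau>"
        then have sp: "s \<in> blotto_pure N K" using that by (auto simp: blotto_mixed_def)
        have "(\<Sum>k<K. f (s k)) \<le> (\<Sum>k<K. (real (s k) - real e + \<alpha>) / (2 * real n))"
          by (rule sum_mono) (rule f_le)
        then show "(\<Sum>k<K. f (s k)) \<le> V" using Lsum[OF sp] by simp
      qed
    qed simp
    then show ?thesis using key by simp
  qed
  have self: "blotto_exp_payoff \<alpha> K \<sigma> \<sigma> = V"
  proof -
    have "measure_pmf.expectation \<sigma> (\<lambda>s. \<Sum>k<K. f (s k)) = measure_pmf.expectation \<sigma> (\<lambda>_. V)"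
    proof (rule integral_cong_AE)
      show "AE s in measure_pmf \<sigma>. (\<Sum>k<K. f (s k)) = V"
      proof (subst AE_measure_pmf_iff, intro ballI)
        fix s assume s: "s \<in> set_pmf \<sigma>"
        then have sp: "s \<in> blotto_pure N K" using \<sigma>m by (auto simp: blotto_mixed_def)
        have "s k \<in> A" if "k < K" for k
        proof -
          have "s k \<in> set_pmf (marginal \<sigma> k)" using s by (auto simp: marginal_def)
          then show ?thesis using marg that finA neA by (simp add: A_def)
        qed
        then have "(\<Sum>k<K. f (s k)) = (\<Sum>k<K. (real (s k) - real e + \<alpha>) / (2 * real n))"
          by (intro sum.cong) (auto intro: f_eq)
        then show "(\<Sum>k<K. f (s k)) = V" using Lsum[OF sp] by simp
      qed
    qed simp_all
    then show ?thesis using key by simp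
  qed
  show ?thesis unfolding blotto_symmetric_eq_def using \<sigma>m dev self by auto
qed


lemma odd_set: "m \<ge> 1 \<Longrightarrow> {j::nat. odd j \<and> j \<le> 2 * m - 1} = (\<lambda>i. 2*i+1) ` {..<m}"
  by (auto elim!: oddE simp: image_iff)

lemma even_set: "{j::nat. even j \<and> j \<le> 2 * m} = (\<lambda>i. 2*i+0) ` {..<m+1}"
  by (auto elim!: evenE simp: image_iff)

theorem mainTheorem13:
  fixes N K m :: nat and \<alpha> :: real and \<sigma> :: "(nat \<Rightarrow> nat) pmf"
  assumes "N \<ge> 1" and "K \<ge> 2" and "K dvd N" and "m = N div K"
    and "1 \<le> \<alpha>" and "\<alpha> \<le> 2"
    and "\<sigma> \<in> blotto_mixed N K"
    and "(\<forall>k<K. marginal \<sigma> k = pmf_of_set {j. odd j \<and> j \<le> 2 * m - 1})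
       \<or> (\<forall>k<K. marginal \<sigma> k = pmf_of_set {j. even j \<and> j \<le> 2 * m})"
  shows "blotto_symmetric_eq N K \<alpha> \<sigma>"
proof -
  have "m \<ge> 1"
  proof (rule ccontr)
    assume "\<not> m \<ge> 1"
    then have "m = 0" by simp
    then have "N = 0" using assms(3,4) by (metis dvd_div_mult_self mult_0)
    then show False using assms(1) by simp
  qed
  from assms(8) show ?thesis
  proof
    assume h: "\<forall>k<K. marginal \<sigma> k = pmf_of_set {j. odd j \<and> j \<le> 2 * m - 1}"
    show ?thesis
      by (rule main_gen[where n=m and e=1]) (use h odd_set[OF \<open>m \<ge> 1\<close>] \<open>m \<ge> 1\<close> assms in auto)
  next
    assume h: "\<forall>k<K. marginal \<sigma> k = pmf_of_set {j. even j \<and> j \<le> 2 * m}"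
    show ?thesis
      by (rule main_gen[where n="m+1" and e=0]) (use h even_set[of m] assms in auto)
  qed
qed

end
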